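(* Let $s\in [n]$ and $S_-=\sum_{m=1}^n \sigma_m^-$ on $(\mathbb{C}^2)^{\otimes n}$. Then $S_-^s$ has the bond dimension $s+1$ MPO representation \[ \langle i_1\cdots i_n|S_-^s|j_1\cdots j_n\rangle=\mathrm{tr}\big((\tilde O_s)_{i_1,j_1}\cdots(\tilde O_s)_{i_n,j_n}\tilde X_s\big)\quad\text{for all }i,j\in\{0,1\}^n, \] where the virtual space $\mathbb{C}^{s+1}$ is that of a spin-$s/2$ with orthonormal basis $\{|\tfrac s2,m\rangle: m=-\tfrac s2,\dots,\tfrac s2\}$, the boundary tensor is $\tilde{X}_s=|\tfrac{s}{2},-\tfrac{s}{2}\rangle\langle\tfrac{s}{2},\tfrac{s}{2}|$, and $(\tilde{O}_s)_{0,0}=(\tilde{O}_s)_{1,1}=I$, $(\tilde{O}_s)_{1,0}=0$, $(\tilde{O}_s)_{0,1}=J_+$. In particular, the states $|\Psi_s\rangle=S_-^s|\Psi\rangle$ have an MPS representation $|\Psi_s\rangle=|\Psi(\tilde{O}_s\diamond A,\tilde{X}_s\otimes X,n)\rangle$ with bond dimension $2(s+1)$.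
   Context: $\sigma^-_m=|0\rangle\langle1|$ acting on qubit $m$. $J_+$ is the spin raising operator on the spin-$j$ representation ($j=s/2$): $J_+|j,m\rangle=\sqrt{j(j+1)-m(m+1)}\,|j,m+1\rangle$ for $m<j$, $J_+|j,j\rangle=0$. With $\omega=e^{2\pi i/n}$, the one-magnon state $|\Psi\rangle=\overline{\omega}\sum_{r=1}^n\omega^r\sigma_r^-|1\rangle^{\otimes n}$ equals the MPS $|\Psi(A,X,n)\rangle=\sum_{i_1,\dots,i_n}\mathrm{tr}(A_{i_1}\cdots A_{i_n}X)|i_1\cdots i_n\rangle$ with $A_0=|1\rangle\langle0|$, $A_1=|0\rangle\langle0|+\omega|1\rangle\langle1|$, $X=|0\rangle\langle1|$. For an MPO tensor $O=\{O_{i,j}\}_{i,j\in\{0,1\}}$ and MPS tensor $A$, $O\diamond A$ is the MPS tensor $(O\diamond A)_i=\sum_{k}O_{i,k}\otimes A_k$. *)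

theory Defs
  imports Complex_Main "Jordan_Normal_Form.Matrix"
begin

(* Computational basis strings of n qubits: lists i = [i_1,...,i_n] with entries in {0,1}.
   Qubit m (1 <= m <= n) is the list entry with index m - 1. *)
definition bstrings :: "nat \<Rightarrow> nat list set" where
  "bstrings n = {xs. length xs = n \<and> set xs \<subseteq> {0,1}}"

(* Operators on (C^2)^{\<otimes> n} given by their matrix elements <i|O|j>, i,j in bstrings n *)
type_synonym qop = "nat list \<Rightarrow> nat list \<Rightarrow> complex"

definition op_id :: qop where
  "op_id i j = (if i = j then 1 else 0)"

definition op_mult :: "nat \<Rightarrow> qop \<Rightarrow> qop \<Rightarrow> qop" where
  "op_mult n P Q i j = (\<Sum>k\<in>bstrings n. P i k * Q k j)"

primrec op_pow :: "nat \<Rightarrow> qop \<Rightarrow> nat \<Rightarrow> qop" where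
  "op_pow n P 0 = op_id"
| "op_pow n P (Suc k) = op_mult n P (op_pow n P k)"

definition op_apply :: "nat \<Rightarrow> qop \<Rightarrow> (nat list \<Rightarrow> complex) \<Rightarrow> (nat list \<Rightarrow> complex)" where
  "op_apply n P psi i = (\<Sum>j\<in>bstrings n. P i j * psi j)"

(* sigma^-_m = |0><1| acting on qubit m (1 <= m <= n), identity elsewhere *)
definition sigma_minus :: "nat \<Rightarrow> qop" where
  "sigma_minus m i j =
     (if i ! (m - 1) = 0 \<and> j ! (m - 1) = 1 \<and> length i = length j \<and>
         (\<forall>k < length i. k \<noteq> m - 1 \<longrightarrow> i ! k = j ! k) then 1 else 0)"

definition S_minus :: "nat \<Rightarrow> qop" where
  "S_minus n i j = (\<Sum>m = 1..n. sigma_minus m i j)"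

(* Virtual spin-s/2 space C^{s+1}: basis index k (0 <= k <= s) stands for |s/2, k - s/2>. *)
definition J_plus :: "nat \<Rightarrow> complex mat" where
  "J_plus s = mat (s+1) (s+1) (\<lambda>(a,b).
     (let j = real s / 2; m = real b - real s / 2 in
      if a = b + 1 then complex_of_real (sqrt (j * (j + 1) - m * (m + 1))) else 0))"

(* \<tilde>X_s = |s/2,-s/2><s/2,s/2| *)
definition Xt :: "nat \<Rightarrow> complex mat" where
  "Xt s = mat (s+1) (s+1) (\<lambda>(a,b). if a = 0 \<and> b = s then 1 else 0)"

definition Ot :: "nat \<Rightarrow> nat \<Rightarrow> nat \<Rightarrow> complex mat" where
  "Ot s i j = (if i = j then 1\<^sub>m (s+1)
               else if i = 0 \<and> j = 1 then J_plus s else 0\<^sub>m (s+1) (s+1))"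

definition mat_trace :: "complex mat \<Rightarrow> complex" where
  "mat_trace M = (\<Sum>k < dim_row M. M $$ (k,k))"

primrec mat_prod_list :: "nat \<Rightarrow> complex mat list \<Rightarrow> complex mat" where
  "mat_prod_list d [] = 1\<^sub>m d"
| "mat_prod_list d (M # Ms) = M * mat_prod_list d Ms"

definition kron :: "complex mat \<Rightarrow> complex mat \<Rightarrow> complex mat" where
  "kron P Q = mat (dim_row P * dim_row Q) (dim_col P * dim_col Q)
     (\<lambda>(a,b). P $$ (a div dim_row Q, b div dim_col Q) * Q $$ (a mod dim_row Q, b mod dim_col Q))"

definition mps :: "nat \<Rightarrow> (nat \<Rightarrow> complex mat) \<Rightarrow> complex mat \<Rightarrow> nat list \<Rightarrow> complex" where
  "mps D A X i = mat_trace (mat_prod_list D (map A i) * X)"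

definition diamond :: "(nat \<Rightarrow> nat \<Rightarrow> complex mat) \<Rightarrow> (nat \<Rightarrow> complex mat) \<Rightarrow> nat \<Rightarrow> complex mat" where
  "diamond Op A i = kron (Op i 0) (A 0) + kron (Op i 1) (A 1)"

definition omega :: "nat \<Rightarrow> complex" where
  "omega n = exp (2 * pi * \<i> / of_nat n)"

definition all_ones :: "nat \<Rightarrow> nat list \<Rightarrow> complex" where
  "all_ones n i = (if i = replicate n 1 then 1 else 0)"

definition magnon :: "nat \<Rightarrow> nat list \<Rightarrow> complex" where
  "magnon n i = cnj (omega n) * (\<Sum>r = 1..n. omega n ^ r * op_apply n (sigma_minus r) (all_ones n) i)"

definition A_mag :: "nat \<Rightarrow> nat \<Rightarrow> complex mat" where
  "A_mag n k = (if k = 0 then mat 2 2 (\<lambda>(a,b). if a = 1 \<and> b = 0 then 1 else 0)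
                else mat 2 2 (\<lambda>(a,b). if a = 0 \<and> b = 0 then 1
                                       else if a = 1 \<and> b = 1 then omega n else 0))"

definition X_mag :: "complex mat" where
  "X_mag = mat 2 2 (\<lambda>(a,b). if a = 0 \<and> b = 1 then 1 else 0)"

end

theory Submission
  imports Defs
begin

lemma mult_entry:
  assumes "i < dim_row A" "j < dim_col B" "dim_col A = dim_row B"
  shows "(A * B) $$ (i,j) = (\<Sum>k<dim_col A. A $$ (i,k) * B $$ (k,j))"
  using assms by (simp add: scalar_prod_def atLeast0LessThan)

lemma trace_cyc:
  assumes "A \<in> carrier_mat n m" "B \<in> carrier_mat m n"
  shows "mat_trace (A * B) = mat_trace (B * A)"
proof -
  have "mat_trace (A * B) = (\<Sum>i<n. \<Sum>k<m. A $$ (i,k) * B $$ (k,i))"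
    using assms unfolding mat_trace_def by (simp add: scalar_prod_def atLeast0LessThan)
  also have "\<dots> = (\<Sum>k<m. \<Sum>i<n. B $$ (k,i) * A $$ (i,k))"
    by (subst sum.swap) (simp add: mult.commute)
  also have "\<dots> = mat_trace (B * A)"
    using assms unfolding mat_trace_def by (simp add: scalar_prod_def atLeast0LessThan)
  finally show ?thesis .
qed

lemma trace_add:
  assumes "A \<in> carrier_mat n n" "B \<in> carrier_mat n n"
  shows "mat_trace (A + B) = mat_trace A + mat_trace B"
  using assms unfolding mat_trace_def by (simp add: sum.distrib)

lemma kron_carrier[simp]:
  "dim_row (kron P Q) = dim_row P * dim_row Q" "dim_col (kron P Q) = dim_col P * dim_col Q"
  unfolding kron_def by auto

lemma kron_index:
  assumes "a < dim_row P * dim_row Q" "b < dim_col P * dim_col Q"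
  shows "kron P Q $$ (a,b) = P $$ (a div dim_row Q, b div dim_col Q) * Q $$ (a mod dim_row Q, b mod dim_col Q)"
  using assms unfolding kron_def by auto

lemma sum_split_add:
  fixes m n :: nat
  shows "(\<Sum>k<m+n. f k) = (\<Sum>k<m. f k) + (\<Sum>k<n. f (m+k))"
  by (induction n) (simp_all add: add.assoc)

lemma sum_div_mod:
  fixes b e :: nat
  shows "(\<Sum>k<b*e. g (k div e) (k mod e)) = (\<Sum>u<b. \<Sum>v<e. g u v)"
proof (induction b)
  case 0 then show ?case by simp
next
  case (Suc b)
  have "(\<Sum>k<Suc b*e. g (k div e) (k mod e)) = (\<Sum>k<b*e + e. g (k div e) (k mod e))"
    by (simp add: add.commute)
  also have "\<dots> = (\<Sum>k<b*e. g (k div e) (k mod e)) + (\<Sum>v<e. g ((b*e+v) div e) ((b*e+v) mod e))"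
    by (rule sum_split_add)
  also have "(\<Sum>v<e. g ((b*e+v) div e) ((b*e+v) mod e)) = (\<Sum>v<e. g b v)"
    by (rule sum.cong) auto
  finally show ?case using Suc by simp
qed

lemma kron_mult:
  assumes "P1 \<in> carrier_mat a b" "P2 \<in> carrier_mat b c" "Q1 \<in> carrier_mat d e" "Q2 \<in> carrier_mat e f"
  shows "kron P1 Q1 * kron P2 Q2 = kron (P1 * P2) (Q1 * Q2)"
proof (rule eq_matI)
  fix x y assume xy: "x < dim_row (kron (P1 * P2) (Q1 * Q2))" "y < dim_col (kron (P1 * P2) (Q1 * Q2))"
  then have x: "x < a * d" and y: "y < c * f" using assms by auto
  have d0: "d > 0" using x by (cases d) auto
  have f0: "f > 0" using y by (cases f) auto
  have xd: "x div d < a" "x mod d < d" and yf: "y div f < c" "y mod f < f"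
    using x y d0 f0 by (auto simp: less_mult_imp_div_less mult.commute)
  have "(kron P1 Q1 * kron P2 Q2) $$ (x,y) = (\<Sum>k<b*e. kron P1 Q1 $$ (x,k) * kron P2 Q2 $$ (k,y))"
    using assms x y by (subst mult_entry) auto
  also have "\<dots> = (\<Sum>k<b*e. (P1 $$ (x div d, k div e) * P2 $$ (k div e, y div f)) *
        (Q1 $$ (x mod d, k mod e) * Q2 $$ (k mod e, y mod f)))"
  proof (rule sum.cong)
    fix k assume "k \<in> {..<b*e}"
    then have "k < b * e" by simp
    then show "kron P1 Q1 $$ (x,k) * kron P2 Q2 $$ (k,y) = (P1 $$ (x div d, k div e) * P2 $$ (k div e, y div f)) *
        (Q1 $$ (x mod d, k mod e) * Q2 $$ (k mod e, y mod f))"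
      using assms x y by (simp add: kron_index mult_ac)
  qed simp
  also have "\<dots> = (\<Sum>u<b. \<Sum>v<e. (P1 $$ (x div d, u) * P2 $$ (u, y div f)) *
        (Q1 $$ (x mod d, v) * Q2 $$ (v, y mod f)))"
    by (rule sum_div_mod)
  also have "\<dots> = (\<Sum>u<b. P1 $$ (x div d, u) * P2 $$ (u, y div f)) * (\<Sum>v<e. Q1 $$ (x mod d, v) * Q2 $$ (v, y mod f))"
    by (simp add: sum_product)
  also have "\<dots> = kron (P1 * P2) (Q1 * Q2) $$ (x,y)"
    using assms x y xd yf by (simp add: kron_index scalar_prod_def atLeast0LessThan)
  finally show "(kron P1 Q1 * kron P2 Q2) $$ (x,y) = kron (P1 * P2) (Q1 * Q2) $$ (x,y)" .
qed (use assms in auto)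

lemma trace_kron:
  assumes "P \<in> carrier_mat a a" "Q \<in> carrier_mat d d"
  shows "mat_trace (kron P Q) = mat_trace P * mat_trace Q"
proof -
  have "mat_trace (kron P Q) = (\<Sum>k<a*d. P $$ (k div d, k div d) * Q $$ (k mod d, k mod d))"
    unfolding mat_trace_def using assms by (intro sum.cong) (auto simp: kron_index)
  also have "\<dots> = (\<Sum>u<a. \<Sum>v<d. P $$ (u,u) * Q $$ (v,v))"
    by (rule sum_div_mod)
  also have "\<dots> = mat_trace P * mat_trace Q"
    unfolding mat_trace_def using assms by (simp add: sum_product)
  finally show ?thesis .
qed

lemma J_plus_carrier: "J_plus s \<in> carrier_mat (s+1) (s+1)"
  unfolding J_plus_def by auto

lemma Ot_carrier: "Ot s i j \<in> carrier_mat (s+1) (s+1)"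
  unfolding Ot_def using J_plus_carrier by auto

lemmas Ot_carrier'[simp] = Ot_carrier[simplified]

lemma A_carrier[simp]: "A_mag n k \<in> carrier_mat 2 2"
  unfolding A_mag_def by auto

lemma prod_carrier:
  "(\<forall>M\<in>set Ms. M \<in> carrier_mat d d) \<Longrightarrow> mat_prod_list d Ms \<in> carrier_mat d d"
  by (induction Ms) auto

lemma prod_Ot_carrier: "mat_prod_list (s+1) (map2 (Ot s) i j) \<in> carrier_mat (s+1) (s+1)"
  by (rule prod_carrier) (auto simp: Ot_carrier)

lemmas prod_Ot_carrier'[simp] = prod_Ot_carrier[simplified]

lemma prod_A_carrier[simp]: "mat_prod_list 2 (map (A_mag n) j) \<in> carrier_mat 2 2"
  by (rule prod_carrier) auto

lemma kron_carrier_mat: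
  assumes "P \<in> carrier_mat a b" "Q \<in> carrier_mat c d"
  shows "kron P Q \<in> carrier_mat (c*a) (d*b)"
proof (rule carrier_matI)
  have "dim_row P = a" "dim_row Q = c" "dim_col P = b" "dim_col Q = d" using assms by (auto dest: carrier_matD)
  then show "dim_row (kron P Q) = c*a" "dim_col (kron P Q) = d*b" by (simp_all add: mult.commute)
qed

lemma dia_carrier: "diamond (Ot s) (A_mag n) x \<in> carrier_mat (2*(s+1)) (2*(s+1))"
proof -
  have c: "kron (Ot s x y) (A_mag n y) \<in> carrier_mat (2*(s+1)) (2*(s+1))" for y
    by (rule kron_carrier_mat[OF Ot_carrier A_carrier])
  show ?thesis unfolding diamond_def by (rule add_carrier_mat[OF c])
qed

lemma prod_dia_carrier:
  "mat_prod_list (2*(s+1)) (map (diamond (Ot s) (A_mag n)) i) \<in> carrier_mat (2*(s+1)) (2*(s+1))"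
  by (rule prod_carrier) (simp only: set_map image_iff, use dia_carrier in blast)

lemmas dia_carrier'[simp] = dia_carrier[simplified]
lemmas prod_dia_carrier'[simp] = prod_dia_carrier[simplified]

lemma finite_bstrings[simp]: "finite (bstrings n)"
proof -
  have "bstrings n \<subseteq> {xs. set xs \<subseteq> {0,1} \<and> length xs = n}" unfolding bstrings_def by auto
  moreover have "finite {xs. set xs \<subseteq> {0::nat,1} \<and> length xs = n}"
    by (rule finite_lists_length_eq) simp
  ultimately show ?thesis by (rule finite_subset)
qed

lemma bstrings_Suc: "bstrings (Suc n) = Cons 0 ` bstrings n \<union> Cons 1 ` bstrings n"
proof
  show "bstrings (Suc n) \<subseteq> Cons 0 ` bstrings n \<union> Cons 1 ` bstrings n"
  proof
    fix xs assume "xs \<in> bstrings (Suc n)"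
    then obtain y ys where "xs = y # ys" "y \<in> {0,1}" "ys \<in> bstrings n"
      unfolding bstrings_def by (cases xs) auto
    then show "xs \<in> Cons 0 ` bstrings n \<union> Cons 1 ` bstrings n" by auto
  qed
qed (auto simp: bstrings_def)

lemma sum_bstrings_Suc:
  "(\<Sum>j\<in>bstrings (Suc n). f j) = (\<Sum>j\<in>bstrings n. f (0#j)) + (\<Sum>j\<in>bstrings n. f (1#j))"
proof -
  have "(\<Sum>j\<in>bstrings (Suc n). f j) = (\<Sum>j\<in>Cons 0 ` bstrings n. f j) + (\<Sum>j\<in>Cons 1 ` bstrings n. f j)"
    unfolding bstrings_Suc by (rule sum.union_disjoint) auto
  also have "\<dots> = (\<Sum>j\<in>bstrings n. f (0#j)) + (\<Sum>j\<in>bstrings n. f (1#j))"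
    by (simp add: sum.reindex)
  finally show ?thesis .
qed

lemma bstrings_0: "bstrings 0 = {[]}" by (rule Set.set_eqI) (auto simp: bstrings_def)

lemma mps_sum:
  assumes "Y \<in> carrier_mat (s+1) (s+1)" "Z \<in> carrier_mat 2 2"
  shows "mat_trace (mat_prod_list (2*(s+1)) (map (diamond (Ot s) (A_mag n)) i) * kron Y Z) =
    (\<Sum>j\<in>bstrings (length i). mat_trace (mat_prod_list (s+1) (map2 (Ot s) i j) * Y) *
        mat_trace (mat_prod_list 2 (map (A_mag n) j) * Z))"
  using assms
proof (induction i arbitrary: Y Z)
  case Nil
  have K: "kron Y Z \<in> carrier_mat (2*(s+1)) (2*(s+1))"
    by (rule kron_carrier_mat[OF Nil(1,2)])
  have "mat_trace (mat_prod_list (2*(s+1)) (map (diamond (Ot s) (A_mag n)) []) * kron Y Z) = mat_trace Y * mat_trace Z"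
    by (simp only: list.map mat_prod_list.simps left_mult_one_mat[OF K] trace_kron[OF Nil(1,2)])
  also have "\<dots> = (\<Sum>j\<in>bstrings (length ([]::nat list)). mat_trace (mat_prod_list (s+1) (map2 (Ot s) [] j) * Y) *
        mat_trace (mat_prod_list 2 (map (A_mag n) j) * Z))"
  proof -
    have "(\<Sum>j\<in>bstrings (length ([]::nat list)). g j) = g []" for g :: "nat list \<Rightarrow> complex"
      by (simp add: bstrings_0)
    then show ?thesis
      by (simp only: zip.simps(1) list.map mat_prod_list.simps left_mult_one_mat[OF Nil(1)] left_mult_one_mat[OF Nil(2)])
  qed
  finally show ?case .
next
  case (Cons x i)
  let ?D = "2*(s+1)"
  let ?R = "mat_prod_list ?D (map (diamond (Ot s) (A_mag n)) i)"
  let ?dx = "diamond (Ot s) (A_mag n) x"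
  let ?K = "kron Y Z"
  let ?P = "\<lambda>j. mat_prod_list (s+1) (map2 (Ot s) i j)"
  let ?Q = "\<lambda>j. mat_prod_list 2 (map (A_mag n) j)"
  have K: "?K \<in> carrier_mat ?D ?D"
    by (rule kron_carrier_mat[OF Cons(2,3)])
  have k0: "kron (Y * Ot s x 0) (Z * A_mag n 0) \<in> carrier_mat ?D ?D"
    by (rule kron_carrier_mat[OF mult_carrier_mat[OF Cons(2) Ot_carrier] mult_carrier_mat[OF Cons(3) A_carrier]])
  have k1: "kron (Y * Ot s x 1) (Z * A_mag n 1) \<in> carrier_mat ?D ?D"
    by (rule kron_carrier_mat[OF mult_carrier_mat[OF Cons(2) Ot_carrier] mult_carrier_mat[OF Cons(3) A_carrier]])
  have R: "?R \<in> carrier_mat ?D ?D" by (rule prod_dia_carrier)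
  have "mat_trace (mat_prod_list ?D (map (diamond (Ot s) (A_mag n)) (x#i)) * ?K) = mat_trace (?dx * (?R * ?K))"
    by (simp only: list.map mat_prod_list.simps assoc_mult_mat[OF dia_carrier R K])
  also have "\<dots> = mat_trace ((?R * ?K) * ?dx)"
    by (rule trace_cyc[OF dia_carrier mult_carrier_mat[OF R K]])
  also have "\<dots> = mat_trace (?R * (?K * ?dx))"
    by (simp only: assoc_mult_mat[OF R K dia_carrier])
  also have "?K * ?dx = kron (Y * Ot s x 0) (Z * A_mag n 0) + kron (Y * Ot s x 1) (Z * A_mag n 1)"
  proof -
    have "?K * ?dx = ?K * kron (Ot s x 0) (A_mag n 0) + ?K * kron (Ot s x 1) (A_mag n 1)"
      unfolding diamond_def
      by (rule mult_add_distrib_mat[OF K kron_carrier_mat[OF Ot_carrier A_carrier] kron_carrier_mat[OF Ot_carrier A_carrier]])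
    then show ?thesis by (simp only: kron_mult[OF Cons(2) Ot_carrier Cons(3) A_carrier])
  qed
  also have "mat_trace (?R * (kron (Y * Ot s x 0) (Z * A_mag n 0) + kron (Y * Ot s x 1) (Z * A_mag n 1)))
     = mat_trace (?R * kron (Y * Ot s x 0) (Z * A_mag n 0)) + mat_trace (?R * kron (Y * Ot s x 1) (Z * A_mag n 1))"
    by (simp only: mult_add_distrib_mat[OF R k0 k1] trace_add[OF mult_carrier_mat[OF R k0] mult_carrier_mat[OF R k1]])
  also have "\<dots> = (\<Sum>j\<in>bstrings (length i). mat_trace (?P j * (Y * Ot s x 0)) * mat_trace (?Q j * (Z * A_mag n 0)))
      + (\<Sum>j\<in>bstrings (length i). mat_trace (?P j * (Y * Ot s x 1)) * mat_trace (?Q j * (Z * A_mag n 1)))"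
    by (simp only: Cons.IH[OF mult_carrier_mat[OF Cons(2) Ot_carrier] mult_carrier_mat[OF Cons(3) A_carrier]])
  also have "\<dots> = (\<Sum>j\<in>bstrings (length (x#i)). mat_trace (mat_prod_list (s+1) (map2 (Ot s) (x#i) j) * Y) *
        mat_trace (mat_prod_list 2 (map (A_mag n) j) * Z))"
  proof -
    have e: "mat_trace (?P j * (Y * Ot s x y)) * mat_trace (?Q j * (Z * A_mag n y)) =
      mat_trace (mat_prod_list (s+1) (map2 (Ot s) (x#i) (y#j)) * Y) *
        mat_trace (mat_prod_list 2 (map (A_mag n) (y#j)) * Z)" for j y
    proof -
      have "mat_trace (?P j * (Y * Ot s x y)) = mat_trace (?P j * Y * Ot s x y)"
        by (simp only: assoc_mult_mat[OF prod_Ot_carrier Cons(2) Ot_carrier])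
      also have "\<dots> = mat_trace (Ot s x y * (?P j * Y))"
        by (rule trace_cyc[OF mult_carrier_mat[OF prod_Ot_carrier Cons(2)] Ot_carrier])
      also have "\<dots> = mat_trace (mat_prod_list (s+1) (map2 (Ot s) (x#i) (y#j)) * Y)"
        by (simp only: list.map mat_prod_list.simps assoc_mult_mat[OF Ot_carrier prod_Ot_carrier Cons(2)] zip_Cons_Cons prod.case)
      finally have 1: "mat_trace (?P j * (Y * Ot s x y)) = mat_trace (mat_prod_list (s+1) (map2 (Ot s) (x#i) (y#j)) * Y)" .
      have "mat_trace (?Q j * (Z * A_mag n y)) = mat_trace (?Q j * Z * A_mag n y)"
        by (simp only: assoc_mult_mat[OF prod_A_carrier Cons(3) A_carrier])
      also have "\<dots> = mat_trace (A_mag n y * (?Q j * Z))"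
        by (rule trace_cyc[OF mult_carrier_mat[OF prod_A_carrier Cons(3)] A_carrier])
      also have "\<dots> = mat_trace (mat_prod_list 2 (map (A_mag n) (y#j)) * Z)"
        by (simp only: list.map mat_prod_list.simps assoc_mult_mat[OF A_carrier prod_A_carrier Cons(3)])
      finally show ?thesis using 1 by simp
    qed
    show ?thesis by (simp only: length_Cons sum_bstrings_Suc e)
  qed
  finally show ?case .
qed

definition coef :: "nat \<Rightarrow> nat \<Rightarrow> nat \<Rightarrow> complex" where
  "coef s b c = (\<Prod>t\<in>{b..<b+c}. complex_of_real (sqrt ((real s - real t) * (real t + 1))))"

definition Jp :: "nat \<Rightarrow> nat \<Rightarrow> complex mat" where
  "Jp s c = mat (s+1) (s+1) (\<lambda>(a,b). if a = b + c then coef s b c else 0)"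

lemma dims[simp]: "dim_row (J_plus s) = Suc s" "dim_col (J_plus s) = Suc s"
  "dim_row (Jp s c) = Suc s" "dim_col (Jp s c) = Suc s"
  "dim_row (Xt s) = Suc s" "dim_col (Xt s) = Suc s"
  by (simp_all add: J_plus_def Jp_def Xt_def)

lemma Jp_carrier: "Jp s c \<in> carrier_mat (s+1) (s+1)"
  unfolding Jp_def by simp

lemma Jp0: "Jp s 0 = 1\<^sub>m (s+1)"
  by (rule eq_matI) (auto simp: Jp_def coef_def)

lemma J_entry: "a < s+1 \<Longrightarrow> k < s+1 \<Longrightarrow> J_plus s $$ (a,k) =
   (if a = k + 1 then complex_of_real (sqrt ((real s - real k) * (real k + 1))) else 0)"
proof -
  assume "a < s+1" "k < s+1"
  moreover have "real s / 2 * (real s / 2 + 1) - (real k - real s / 2) * (real k - real s / 2 + 1)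
     = (real s - real k) * (real k + 1)"
    by (simp add: field_simps)
  ultimately show ?thesis unfolding J_plus_def by (simp add: Let_def)
qed

lemma JJp: "J_plus s * Jp s c = Jp s (Suc c)"
proof (rule eq_matI)
  fix a b assume ab: "a < dim_row (Jp s (Suc c))" "b < dim_col (Jp s (Suc c))"
  then have a: "a < s+1" and b: "b < s+1" by (auto simp: Jp_def)
  have "(J_plus s * Jp s c) $$ (a,b) = (\<Sum>k<s+1. J_plus s $$ (a,k) * Jp s c $$ (k,b))"
    using a b by (subst mult_entry) auto
  also have "\<dots> = Jp s (Suc c) $$ (a,b)"
  proof (cases a)
    case 0
    then show ?thesis using a b by (simp add: J_entry Jp_def)
  next
    case (Suc a')
    have "(\<Sum>k<s+1. J_plus s $$ (a,k) * Jp s c $$ (k,b)) =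
      (\<Sum>k<s+1. if k = a' then complex_of_real (sqrt ((real s - real a') * (real a' + 1))) * Jp s c $$ (a',b) else 0)"
      by (rule sum.cong) (use a Suc in \<open>auto simp: J_entry\<close>)
    also have "\<dots> = complex_of_real (sqrt ((real s - real a') * (real a' + 1))) * Jp s c $$ (a',b)"
      using a Suc by (subst sum.delta) auto
    also have "\<dots> = Jp s (Suc c) $$ (a,b)"
    proof (cases "a' = b + c")
      case True
      have "coef s b (Suc c) = coef s b c * complex_of_real (sqrt ((real s - real (b+c)) * (real (b+c) + 1)))"
        unfolding coef_def by (simp add: prod.atLeastLessThan_Suc)
      then show ?thesis using True Suc a b by (simp add: Jp_def mult.commute)
    next
      case False
      then show ?thesis using Suc a b by (simp add: Jp_def)
    qed
    finally show ?thesis using Suc by simp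
  qed
  finally show "(J_plus s * Jp s c) $$ (a,b) = Jp s (Suc c) $$ (a,b)" .
qed simp_all

lemma card_Suc_split:
  "card {m. m < Suc l \<and> P m} = (if P 0 then 1 else 0) + card {m. m < l \<and> P (Suc m)}"
proof -
  have e: "{m. m < Suc l \<and> P m} = (if P 0 then {0} else {}) \<union> Suc ` {m. m < l \<and> P (Suc m)}"
  proof (rule Set.set_eqI)
    fix m show "m \<in> {m. m < Suc l \<and> P m} \<longleftrightarrow> m \<in> (if P 0 then {0} else {}) \<union> Suc ` {m. m < l \<and> P (Suc m)}"
      by (cases m) auto
  qed
  have "card (Suc ` {m. m < l \<and> P (Suc m)}) = card {m. m < l \<and> P (Suc m)}"
    by (rule card_image) simp
  moreover have "0 \<notin> Suc ` {m. m < l \<and> P (Suc m)}" by auto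
  moreover have "finite (Suc ` {m. m < l \<and> P (Suc m)})" by simp
  ultimately show ?thesis unfolding e by auto
qed

lemma prod_Ot:
  "length i = length j \<Longrightarrow> set i \<subseteq> {0,1} \<Longrightarrow> set j \<subseteq> {0,1} \<Longrightarrow>
   mat_prod_list (s+1) (map2 (Ot s) i j) =
   (if (\<forall>m<length i. i!m \<le> j!m) then Jp s (card {m. m < length i \<and> i!m < j!m}) else 0\<^sub>m (s+1) (s+1))"
proof (induction i arbitrary: j)
  case Nil
  then show ?case by (simp add: Jp0)
next
  case (Cons x i)
  then obtain y j' where j: "j = y # j'" by (cases j) auto
  have IH: "mat_prod_list (s+1) (map2 (Ot s) i j') =
   (if (\<forall>m<length i. i!m \<le> j'!m) then Jp s (card {m. m < length i \<and> i!m < j'!m}) else 0\<^sub>m (s+1) (s+1))"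
    using Cons j by auto
  have M: "mat_prod_list (s+1) (map2 (Ot s) i j') \<in> carrier_mat (s+1) (s+1)" by (rule prod_Ot_carrier)
  have lhs: "mat_prod_list (s+1) (map2 (Ot s) (x#i) j) = Ot s x y * mat_prod_list (s+1) (map2 (Ot s) i j')"
    by (simp add: j)
  have all: "(\<forall>m<length (x#i). (x#i)!m \<le> j!m) = (x \<le> y \<and> (\<forall>m<length i. i!m \<le> j'!m))"
    by (simp add: j All_less_Suc2)
  have card: "card {m. m < length (x#i) \<and> (x#i)!m < j!m} = (if x < y then 1 else 0) + card {m. m < length i \<and> i!m < j'!m}"
    by (simp add: j card_Suc_split)
  have xy: "x \<in> {0,1}" "y \<in> {0,1}" using Cons j by auto
  show ?case
  proof (cases "x = y")
    case True
    then show ?thesis unfolding lhs all card IH using M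
      by (cases "\<forall>m<length i. i!m \<le> j'!m") (auto simp: Ot_def)
  next
    case False
    show ?thesis
    proof (cases "x = 0")
      case True
      then have y: "y = 1" using xy False by auto
      show ?thesis unfolding lhs all card IH using True y
        by (cases "\<forall>m<length i. i!m \<le> j'!m") (auto simp: Ot_def JJp right_mult_zero_mat[OF J_plus_carrier])
    next
      case False
      then have x1: "x = 1" "y = 0" using xy \<open>x \<noteq> y\<close> by auto
      have O: "Ot s x y = 0\<^sub>m (s+1) (s+1)" using x1 by (simp add: Ot_def)
      show ?thesis unfolding lhs all card O left_mult_zero_mat[OF M] using x1 by simp
    qed
  qed
qed

lemma trace_Xt:
  assumes "M \<in> carrier_mat (s+1) (s+1)"
  shows "mat_trace (M * Xt s) = M $$ (s, 0)"
proof -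
  have "mat_trace (M * Xt s) = (\<Sum>k<s+1. \<Sum>l<s+1. M $$ (k,l) * Xt s $$ (l,k))"
    unfolding mat_trace_def using assms by (simp add: Xt_def scalar_prod_def atLeast0LessThan)
  also have "\<dots> = (\<Sum>k<s+1. if k = s then M $$ (s,0) else 0)"
  proof (rule sum.cong)
    fix k assume k: "k \<in> {..<s+1}"
    have "(\<Sum>l<s+1. M $$ (k,l) * Xt s $$ (l,k)) = (\<Sum>l<s+1. if l = 0 then (if k = s then M $$ (k,0) else 0) else 0)"
      by (rule sum.cong) (use k in \<open>auto simp: Xt_def\<close>)
    also have "\<dots> = (if k = s then M $$ (s,0) else 0)" by (subst sum.delta) auto
    finally show "(\<Sum>l<s+1. M $$ (k,l) * Xt s $$ (l,k)) = (if k = s then M $$ (s,0) else 0)" .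
  qed simp
  also have "\<dots> = M $$ (s,0)" by (subst sum.delta) auto
  finally show ?thesis .
qed

lemma sqrt_prod: "finite A \<Longrightarrow> sqrt (prod f A) = (\<Prod>t\<in>A. sqrt (f t))"
  by (induction rule: finite_induct) (simp_all add: real_sqrt_mult)

lemma coef_full: "coef s 0 s = fact s"
proof -
  have r1: "(\<Prod>t\<in>{0..<s}. real s - real t) = fact s"
  proof -
    have "(\<Prod>t\<in>{0..<s}. real s - real t) = (\<Prod>t\<in>{0..<s}. real s - real (s + 0 - Suc t))"
      by (rule prod.atLeastLessThan_rev)
    also have "\<dots> = (\<Prod>t\<in>{0..<s}. real (Suc t))"
      by (rule prod.cong) (auto simp: of_nat_diff)
    also have "\<dots> = fact s" by (simp add: fact_prod_Suc)
    finally show ?thesis .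
  qed
  have r2: "(\<Prod>t\<in>{0..<s}. real t + 1) = fact s"
    by (simp add: fact_prod_Suc add.commute)
  have "(\<Prod>t\<in>{0..<s}. sqrt ((real s - real t) * (real t + 1))) = sqrt (\<Prod>t\<in>{0..<s}. (real s - real t) * (real t + 1))"
    by (simp add: sqrt_prod)
  also have "\<dots> = sqrt (fact s * fact s)" by (simp add: prod.distrib r1 r2)
  also have "\<dots> = fact s" by simp
  finally have "(\<Prod>t\<in>{0..<s}. sqrt ((real s - real t) * (real t + 1))) = fact s" .
  then have "complex_of_real (\<Prod>t\<in>{0..<s}. sqrt ((real s - real t) * (real t + 1))) = fact s"
    by simp
  then show ?thesis unfolding coef_def by (simp add: of_real_prod)
qed

lemma trace_Ot:
  assumes "length i = length j" "set i \<subseteq> {0,1}" "set j \<subseteq> {0,1}"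
  shows "mat_trace (mat_prod_list (s+1) (map2 (Ot s) i j) * Xt s) =
    (if (\<forall>m<length i. i!m \<le> j!m) \<and> card {m. m < length i \<and> i!m < j!m} = s then fact s else 0)"
proof -
  have "mat_trace (mat_prod_list (s+1) (map2 (Ot s) i j) * Xt s) = mat_prod_list (s+1) (map2 (Ot s) i j) $$ (s,0)"
    by (rule trace_Xt[OF prod_Ot_carrier])
  also have "\<dots> = (if (\<forall>m<length i. i!m \<le> j!m) then Jp s (card {m. m < length i \<and> i!m < j!m}) else 0\<^sub>m (s+1) (s+1)) $$ (s,0)"
    by (simp only: prod_Ot[OF assms])
  finally show ?thesis by (simp add: Jp_def coef_full)
qed

definition G :: "nat \<Rightarrow> nat list \<Rightarrow> nat list \<Rightarrow> complex" where
  "G s i j = (if (\<forall>m<length i. i!m \<le> j!m) \<and> card {m. m < length i \<and> i!m < j!m} = s then fact s else 0)"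

lemma bstrings_nth: "i \<in> bstrings n \<Longrightarrow> m < n \<Longrightarrow> i!m = 0 \<or> i!m = 1"
  unfolding bstrings_def using nth_mem by fastforce

lemma bstrings_len: "i \<in> bstrings n \<Longrightarrow> length i = n"
  unfolding bstrings_def by simp

lemma bstrings_upd: "i \<in> bstrings n \<Longrightarrow> i[m := 1] \<in> bstrings n"
  unfolding bstrings_def using set_update_subset_insert by fastforce

lemma G0: assumes "i \<in> bstrings n" "j \<in> bstrings n" shows "op_id i j = G 0 i j"
proof (cases "i = j")
  case True then show ?thesis by (simp add: op_id_def G_def)
next
  case False
  have li: "length i = n" "length j = n" using assms by (auto simp: bstrings_len)
  then obtain m where m: "m < n" "i!m \<noteq> j!m" using False nth_equalityI by metis
  have "\<not> ((\<forall>m<length i. i!m \<le> j!m) \<and> card {m. m < length i \<and> i!m < j!m} = 0)"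
  proof
    assume h: "(\<forall>m<length i. i!m \<le> j!m) \<and> card {m. m < length i \<and> i!m < j!m} = 0"
    then have "i!m < j!m" using m li by force
    then have "m \<in> {m. m < length i \<and> i!m < j!m}" using m li by simp
    moreover have "finite {m. m < length i \<and> i!m < j!m}" by simp
    ultimately have "card {m. m < length i \<and> i!m < j!m} > 0" using card_gt_0_iff by blast
    then show False using h by simp
  qed
  then show ?thesis using False by (simp add: op_id_def G_def)
qed

lemma sigma_eq:
  assumes "i \<in> bstrings n" "k \<in> bstrings n" "m < n"
  shows "sigma_minus (Suc m) i k = (if k = i[m := 1] \<and> i!m = 0 then 1 else 0)"
proof -
  have li: "length i = n" "length k = n" using assms by (auto simp: bstrings_len)
  have "(i!m = 0 \<and> k!m = 1 \<and> length i = length k \<and> (\<forall>q<length i. q \<noteq> m \<longrightarrow> i!q = k!q))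
     \<longleftrightarrow> (k = i[m := 1] \<and> i!m = 0)"
  proof
    assume h: "i!m = 0 \<and> k!m = 1 \<and> length i = length k \<and> (\<forall>q<length i. q \<noteq> m \<longrightarrow> i!q = k!q)"
    have "k = i[m := 1]"
      by (rule nth_equalityI) (use h li assms(3) in \<open>auto simp: nth_list_update\<close>)
    then show "k = i[m := 1] \<and> i!m = 0" using h by simp
  next
    assume h: "k = i[m := 1] \<and> i!m = 0"
    then show "i!m = 0 \<and> k!m = 1 \<and> length i = length k \<and> (\<forall>q<length i. q \<noteq> m \<longrightarrow> i!q = k!q)"
      using li assms(3) by (auto simp: nth_list_update)
  qed
  then show ?thesis unfolding sigma_minus_def by simp
qed

lemma sum_sigma:
  assumes "i \<in> bstrings n" "m < n"
  shows "(\<Sum>k\<in>bstrings n. sigma_minus (Suc m) i k * f k) = (if i!m = 0 then f (i[m := 1]) else 0)"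
proof -
  have "(\<Sum>k\<in>bstrings n. sigma_minus (Suc m) i k * f k) =
        (\<Sum>k\<in>bstrings n. if k = i[m := 1] then (if i!m = 0 then f (i[m := 1]) else 0) else 0)"
    by (rule sum.cong) (use assms in \<open>auto simp: sigma_eq\<close>)
  also have "\<dots> = (if i!m = 0 then f (i[m := 1]) else 0)"
    using bstrings_upd[OF assms(1)] by (subst sum.delta) auto
  finally show ?thesis .
qed

lemma G_step:
  assumes i: "i \<in> bstrings n" and j: "j \<in> bstrings n" and m: "m < n"
  defines "D \<equiv> {q. q < n \<and> i!q < j!q}"
  shows "(if i!m = 0 then G s (i[m := 1]) j else 0) =
         (if (\<forall>q<n. i!q \<le> j!q) \<and> card D = Suc s \<and> m \<in> D then fact s else 0)"
proof -
  have li: "length i = n" "length j = n" using i j by (auto simp: bstrings_len)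
  have finD: "finite D" unfolding D_def by simp
  show ?thesis
  proof (cases "i!m = 0")
    case False
    then have "i!m = 1" using bstrings_nth[OF i m] by simp
    moreover have "j!m \<le> 1" using bstrings_nth[OF j m] by auto
    ultimately have "m \<notin> D" unfolding D_def by auto
    then show ?thesis using False by simp
  next
    case True
    have all: "(\<forall>q<n. i[m:=1]!q \<le> j!q) \<longleftrightarrow> (\<forall>q<n. i!q \<le> j!q) \<and> m \<in> D"
    proof
      assume h: "\<forall>q<n. i[m:=1]!q \<le> j!q"
      then have "1 \<le> j!m" using m li by (metis nth_list_update_eq)
      moreover have "\<forall>q<n. i!q \<le> j!q"
      proof (intro allI impI)
        fix q assume q: "q < n"
        show "i!q \<le> j!q"
        proof (cases "q = m")
          case True then show ?thesis using \<open>i!m = 0\<close> by simp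
        next
          case False then show ?thesis using h q by (metis nth_list_update_neq)
        qed
      qed
      ultimately show "(\<forall>q<n. i!q \<le> j!q) \<and> m \<in> D" unfolding D_def using True m by auto
    next
      assume h: "(\<forall>q<n. i!q \<le> j!q) \<and> m \<in> D"
      then have "j!m = 1" using bstrings_nth[OF j m] unfolding D_def by auto
      show "\<forall>q<n. i[m:=1]!q \<le> j!q"
      proof (intro allI impI)
        fix q assume q: "q < n"
        show "i[m:=1]!q \<le> j!q"
        proof (cases "q = m")
          case True then show ?thesis using \<open>j!m = 1\<close> li m by simp
        next
          case False then show ?thesis using h q by simp
        qed
      qed
    qed
    have cardD: "m \<in> D \<Longrightarrow> {q. q < n \<and> i[m:=1]!q < j!q} = D - {m}"
      unfolding D_def using li bstrings_nth[OF j m] by (auto simp: nth_list_update)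
    have Gs: "G s (i[m:=1]) j = (if ((\<forall>q<n. i!q \<le> j!q) \<and> m \<in> D) \<and> card {q. q < n \<and> i[m:=1]!q < j!q} = s then fact s else 0)"
      by (simp only: G_def length_list_update li all)
    have "G s (i[m := 1]) j = (if (\<forall>q<n. i!q \<le> j!q) \<and> card D = Suc s \<and> m \<in> D then fact s else 0)"
    proof (cases "(\<forall>q<n. i!q \<le> j!q) \<and> m \<in> D")
      case True
      then have "card {q. q < n \<and> i[m:=1]!q < j!q} = card D - 1"
        using cardD finD by simp
      moreover have "card D > 0" using True finD card_gt_0_iff by blast
      ultimately have c: "card {q. q < n \<and> i[m:=1]!q < j!q} = s \<longleftrightarrow> card D = Suc s" by linarith
      show ?thesis unfolding Gs using True c by simp
    next
      case False
      show ?thesis unfolding Gs using False by auto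
    qed
    then show ?thesis using True by simp
  qed
qed

lemma opA:
  "i \<in> bstrings n \<Longrightarrow> j \<in> bstrings n \<Longrightarrow> op_pow n (S_minus n) s i j = G s i j"
proof (induction s arbitrary: i j)
  case 0
  then show ?case using G0 by simp
next
  case (Suc s)
  define D where "D = {q. q < n \<and> i!q < j!q}"
  have li: "length i = n" "length j = n" using Suc.prems by (auto simp: bstrings_len)
  have "op_pow n (S_minus n) (Suc s) i j = (\<Sum>k\<in>bstrings n. S_minus n i k * G s k j)"
    using Suc by (simp add: op_mult_def)
  also have "\<dots> = (\<Sum>k\<in>bstrings n. \<Sum>m\<in>{1..n}. sigma_minus m i k * G s k j)"
    by (simp add: S_minus_def sum_distrib_right)
  also have "\<dots> = (\<Sum>m\<in>{1..n}. \<Sum>k\<in>bstrings n. sigma_minus m i k * G s k j)"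
    by (rule sum.swap)
  also have "\<dots> = (\<Sum>m<n. \<Sum>k\<in>bstrings n. sigma_minus (Suc m) i k * G s k j)"
    by (simp add: sum.atLeast1_atMost_eq)
  also have "\<dots> = (\<Sum>m<n. if i!m = 0 then G s (i[m := 1]) j else 0)"
    by (rule sum.cong) (use Suc.prems in \<open>auto simp: sum_sigma\<close>)
  also have "\<dots> = (\<Sum>m<n. if (\<forall>q<n. i!q \<le> j!q) \<and> card D = Suc s \<and> m \<in> D then fact s else 0)"
    by (rule sum.cong) (use Suc.prems in \<open>auto simp: G_step D_def\<close>)
  also have "\<dots> = G (Suc s) i j"
  proof (cases "(\<forall>q<n. i!q \<le> j!q) \<and> card D = Suc s")
    case True
    have "D \<subseteq> {..<n}" unfolding D_def by auto
    then have sD: "{m \<in> {..<n}. m \<in> D} = D" by blast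
    have "(\<Sum>m<n. if (\<forall>q<n. i!q \<le> j!q) \<and> card D = Suc s \<and> m \<in> D then (fact s :: complex) else 0)
        = (\<Sum>m<n. if m \<in> D then (fact s :: complex) else 0)" using True by simp
    also have "\<dots> = sum (\<lambda>_. fact s) {m \<in> {..<n}. m \<in> D}"
      by (rule sum.inter_filter[symmetric]) simp
    also have "\<dots> = (\<Sum>m\<in>D. fact s)" by (simp only: sD)
    also have "\<dots> = of_nat (Suc s) * fact s" using True by simp
    also have "\<dots> = fact (Suc s)" by simp
    also have "\<dots> = G (Suc s) i j" using True li unfolding G_def D_def by simp
    finally show ?thesis .
  next
    case False
    have nc: "\<not> ((\<forall>m<length i. i!m \<le> j!m) \<and> card {m. m < length i \<and> i!m < j!m} = Suc s)"
      using False li unfolding D_def by simp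
    have "G (Suc s) i j = 0" unfolding G_def by (rule if_not_P[OF nc])
    moreover have "(\<Sum>m<n. if (\<forall>q<n. i!q \<le> j!q) \<and> card D = Suc s \<and> m \<in> D then (fact s :: complex) else 0) = 0"
      by (intro sum.neutral ballI) (use False in auto)
    ultimately show ?thesis by simp
  qed
  finally show ?case .
qed

lemma two_entry:
  assumes "A \<in> carrier_mat 2 2" "M \<in> carrier_mat 2 2" "a < 2" "b < 2"
  shows "(A * M) $$ (a,b) = A $$ (a,0) * M $$ (0,b) + A $$ (a,1) * M $$ (1,b)"
  using assms by (subst mult_entry) (auto simp: numeral_2_eq_2)

lemma A0_entries: "A_mag n 0 $$ (0,0) = 0" "A_mag n 0 $$ (0,1) = 0" "A_mag n 0 $$ (1,0) = 1" "A_mag n 0 $$ (1,1) = 0"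
  by (simp_all add: A_mag_def)

lemma A1_entries: "A_mag n 1 $$ (0,0) = 1" "A_mag n 1 $$ (0,1) = 0" "A_mag n 1 $$ (1,0) = 0" "A_mag n 1 $$ (1,1) = omega n"
  by (simp_all add: A_mag_def)

lemma prodA:
  assumes "set j \<subseteq> {0,1}"
  shows "mat_prod_list 2 (map (A_mag n) j) $$ (0,0) = (if j = replicate (length j) 1 then 1 else 0) \<and>
         mat_prod_list 2 (map (A_mag n) j) $$ (0,1) = 0 \<and>
         mat_prod_list 2 (map (A_mag n) j) $$ (1,0) = (\<Sum>r<length j. if j = (replicate (length j) 1)[r := 0] then omega n ^ r else 0) \<and>
         mat_prod_list 2 (map (A_mag n) j) $$ (1,1) = (if j = replicate (length j) 1 then omega n ^ length j else 0)"
  using assms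
proof (induction j)
  case Nil
  then show ?case by simp
next
  case (Cons x j)
  let ?M = "mat_prod_list 2 (map (A_mag n) j)"
  have M: "?M \<in> carrier_mat 2 2" by simp
  have IH: "?M $$ (0,0) = (if j = replicate (length j) 1 then 1 else 0)"
           "?M $$ (0,1) = 0"
           "?M $$ (1,0) = (\<Sum>r<length j. if j = (replicate (length j) 1)[r := 0] then omega n ^ r else 0)"
           "?M $$ (1,1) = (if j = replicate (length j) 1 then omega n ^ length j else 0)"
    using Cons by auto
  have lt: "(0::nat) < 2" "(1::nat) < 2" by simp_all
  have x: "x = 0 \<or> x = 1" using Cons by auto
  then show ?case
  proof
    assume x0: "x = 0"
    have s0: "(\<Sum>r<length (0#j). if 0#j = (replicate (length (0#j)) 1)[r := 0] then omega n ^ r else 0)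
       = (if j = replicate (length j) 1 then 1 else 0)"
      unfolding length_Cons by (subst sum.lessThan_Suc_shift) simp
    have h: "mat_prod_list 2 (map (A_mag n) (0#j)) $$ (0,0) = (if 0#j = replicate (length (0#j)) 1 then 1 else 0) \<and>
         mat_prod_list 2 (map (A_mag n) (0#j)) $$ (0,1) = 0 \<and>
         mat_prod_list 2 (map (A_mag n) (0#j)) $$ (1,0) = (\<Sum>r<length (0#j). if 0#j = (replicate (length (0#j)) 1)[r := 0] then omega n ^ r else 0) \<and>
         mat_prod_list 2 (map (A_mag n) (0#j)) $$ (1,1) = (if 0#j = replicate (length (0#j)) 1 then omega n ^ length (0#j) else 0)"
      by (simp only: s0 list.map mat_prod_list.simps two_entry[OF A_carrier M] lt A0_entries IH) simp
    show ?case using h x0 by simp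
  next
    assume x1: "x = 1"
    have s1: "(\<Sum>r<length (1#j). if 1#j = (replicate (length (1#j)) 1)[r := 0] then omega n ^ r else 0)
       = omega n * (\<Sum>r<length j. if j = (replicate (length j) 1)[r := 0] then omega n ^ r else 0)"
      unfolding length_Cons by (subst sum.lessThan_Suc_shift) (auto simp: sum_distrib_left intro!: sum.cong)
    have h: "mat_prod_list 2 (map (A_mag n) (1#j)) $$ (0,0) = (if 1#j = replicate (length (1#j)) 1 then 1 else 0) \<and>
         mat_prod_list 2 (map (A_mag n) (1#j)) $$ (0,1) = 0 \<and>
         mat_prod_list 2 (map (A_mag n) (1#j)) $$ (1,0) = (\<Sum>r<length (1#j). if 1#j = (replicate (length (1#j)) 1)[r := 0] then omega n ^ r else 0) \<and>
         mat_prod_list 2 (map (A_mag n) (1#j)) $$ (1,1) = (if 1#j = replicate (length (1#j)) 1 then omega n ^ length (1#j) else 0)"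
      by (simp only: s1 list.map mat_prod_list.simps two_entry[OF A_carrier M] lt A1_entries IH) simp
    show ?case using h x1 by simp
  qed
qed

lemma X_carrier: "X_mag \<in> carrier_mat 2 2" unfolding X_mag_def by simp

lemma trace_X:
  assumes "M \<in> carrier_mat 2 2"
  shows "mat_trace (M * X_mag) = M $$ (1,0)"
proof -
  have "mat_trace (M * X_mag) = (M * X_mag) $$ (0,0) + (M * X_mag) $$ (1,1)"
    unfolding mat_trace_def using assms by (simp add: numeral_2_eq_2)
  also have "\<dots> = M $$ (1,0)"
    by (simp only: two_entry[OF assms X_carrier] numeral_2_eq_2 zero_less_Suc lessI) (simp add: X_mag_def)
  finally show ?thesis .
qed
lemma mps_magnon:
  assumes "set j \<subseteq> {0,1}"
  shows "mps 2 (A_mag n) X_mag j = (\<Sum>r<length j. if j = (replicate (length j) 1)[r := 0] then omega n ^ r else 0)"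
  unfolding mps_def using prodA[OF assms] trace_X[OF prod_A_carrier] by simp

lemma omega_cnj: "cnj (omega n) * omega n = 1"
proof -
  have "norm (omega n) = 1" unfolding omega_def by (simp add: norm_exp_eq_Re)
  then show ?thesis using complex_norm_square[of "omega n"] by (simp add: mult.commute)
qed

lemma magnon_eq:
  assumes j: "j \<in> bstrings n"
  shows "magnon n j = mps 2 (A_mag n) X_mag j"
proof -
  have lj: "length j = n" using j by (simp add: bstrings_len)
  have rep: "replicate n 1 \<in> bstrings n" unfolding bstrings_def by auto
  have ap: "op_apply n (sigma_minus (Suc r)) (all_ones n) j = (if j = (replicate n 1)[r := 0] then 1 else 0)"
    if r: "r < n" for r
  proof -
    have iff: "(replicate n 1 = j[r := 1] \<and> j!r = 0) = (j = (replicate n 1)[r := 0])"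
    proof
      assume h: "replicate n 1 = j[r := 1] \<and> j!r = 0"
      then have "(replicate n 1)[r := 0] = (j[r := 1])[r := 0]" by simp
      also have "\<dots> = j[r := 0]" by simp
      also have "\<dots> = j" using h by (metis list_update_id)
      finally show "j = (replicate n 1)[r := 0]" by simp
    next
      assume h: "j = (replicate n 1)[r := 0]"
      have e1: "(replicate n (1::nat))[r := 1] = replicate n 1" using r by (simp add: list_update_same_conv)
      show "replicate n 1 = j[r := 1] \<and> j!r = 0" using h r e1 by simp
    qed
    have "op_apply n (sigma_minus (Suc r)) (all_ones n) j = (\<Sum>k\<in>bstrings n. if k = replicate n 1 then sigma_minus (Suc r) j k else 0)"
      unfolding op_apply_def all_ones_def by (rule sum.cong) auto
    also have "\<dots> = sigma_minus (Suc r) j (replicate n 1)" using rep by (subst sum.delta) auto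
    also have "\<dots> = (if replicate n 1 = j[r := 1] \<and> j!r = 0 then 1 else 0)"
      by (rule sigma_eq[OF j rep r])
    also have "(if replicate n 1 = j[r := 1] \<and> j!r = 0 then 1 else 0) = (if j = (replicate n 1)[r := 0] then (1::complex) else 0)"
      by (simp only: iff)
    finally show ?thesis .
  qed
  have "magnon n j = cnj (omega n) * (\<Sum>r<n. omega n ^ Suc r * (if j = (replicate n 1)[r := 0] then 1 else 0))"
    unfolding magnon_def by (simp add: sum.atLeast1_atMost_eq ap)
  also have "\<dots> = (\<Sum>r<n. if j = (replicate n 1)[r := 0] then omega n ^ r else 0)"
    by (subst sum_distrib_left, rule sum.cong) (auto simp: power_Suc mult.assoc[symmetric] omega_cnj)
  also have "\<dots> = mps 2 (A_mag n) X_mag j"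
    using mps_magnon[of j n] j lj unfolding bstrings_def by simp
  finally show ?thesis .
qed

lemma Xt_carrier: "Xt s \<in> carrier_mat (s+1) (s+1)" unfolding Xt_def by simp

theorem lemma17:
  fixes n s :: nat
  assumes "s \<in> {1..n}"
  shows "(\<forall>i \<in> bstrings n. \<forall>j \<in> bstrings n.
            op_pow n (S_minus n) s i j =
            mat_trace (mat_prod_list (s+1) (map2 (Ot s) i j) * Xt s))
       \<and> (\<forall>i \<in> bstrings n.
            op_apply n (op_pow n (S_minus n) s) (magnon n) i =
            mps (2 * (s+1)) (diamond (Ot s) (A_mag n)) (kron (Xt s) X_mag) i)"
proof -
  have part1: "op_pow n (S_minus n) s i j = mat_trace (mat_prod_list (s+1) (map2 (Ot s) i j) * Xt s)"
    if i: "i \<in> bstrings n" and j: "j \<in> bstrings n" for i j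
  proof -
    have l: "length i = length j" using i j by (simp add: bstrings_len)
    have si: "set i \<subseteq> {0,1}" "set j \<subseteq> {0,1}" using i j unfolding bstrings_def by auto
    have "op_pow n (S_minus n) s i j = G s i j" by (rule opA[OF i j])
    also have "\<dots> = mat_trace (mat_prod_list (s+1) (map2 (Ot s) i j) * Xt s)"
      unfolding G_def by (rule trace_Ot[OF l si, symmetric])
    finally show ?thesis .
  qed
  have part2: "op_apply n (op_pow n (S_minus n) s) (magnon n) i =
            mps (2 * (s+1)) (diamond (Ot s) (A_mag n)) (kron (Xt s) X_mag) i"
    if i: "i \<in> bstrings n" for i
  proof -
    have "op_apply n (op_pow n (S_minus n) s) (magnon n) i =
      (\<Sum>j\<in>bstrings n. mat_trace (mat_prod_list (s+1) (map2 (Ot s) i j) * Xt s) *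
        mat_trace (mat_prod_list 2 (map (A_mag n) j) * X_mag))"
      unfolding op_apply_def
    proof (rule sum.cong)
      fix j assume j: "j \<in> bstrings n"
      show "op_pow n (S_minus n) s i j * magnon n j = mat_trace (mat_prod_list (s+1) (map2 (Ot s) i j) * Xt s) *
        mat_trace (mat_prod_list 2 (map (A_mag n) j) * X_mag)"
        using part1[OF i j] magnon_eq[OF j] unfolding mps_def by simp
    qed simp
    also have "\<dots> = mps (2 * (s+1)) (diamond (Ot s) (A_mag n)) (kron (Xt s) X_mag) i"
      unfolding mps_def mps_sum[OF Xt_carrier X_carrier] bstrings_len[OF i] ..
    finally show ?thesis .
  qed
  show ?thesis using part1 part2 by blast
qed

end
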